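(* Let $K\subset\mathbb E$ be a regular cone and $F$ a normal barrier for $K$ with negative curvature. Then for every $x\in\operatorname{int}K$ and every $h\in K$, $$\nabla^2F(x)h\in K^*\qquad\text{and}\qquad \nabla F(x+h)-\nabla F(x)\in K^*.$$
   Context: $\mathbb E$ finite-dimensional real space, dual $\mathbb E^*$, pairing $\langle\cdot,\cdot\rangle$. $K$ regular: closed, convex, pointed, nonempty interior; $K^*=\{s\in\mathbb E^*:\langle s,x\rangle\ge0\ \forall x\in K\}$. A normal barrier for $K$ is a self-concordant barrier $F$ on $\operatorname{int}K$ with $F(\tau x)=F(x)-\nu\ln\tau$ for all $\tau>0$. $F$ has negative curvature if $D^3F(x)[h,u,u]\le0$ for all $x\in\operatorname{int}K$, $h\in K$, $u\in\mathbb E$. *)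

theory Defs
  imports "HOL-Analysis.Analysis"
begin

text \<open>The space E is a finite-dimensional real inner product space ('a::euclidean_space);
  its dual is identified with 'a itself via the inner product, so the pairing is \<open>s \<bullet> x\<close>.\<close>

definition regular_cone :: "'a::euclidean_space set \<Rightarrow> bool" where
  "regular_cone K \<longleftrightarrow> cone K \<and> closed K \<and> convex K \<and>
     K \<inter> uminus ` K = {0} \<and> interior K \<noteq> {}"

definition dual_cone :: "'a::euclidean_space set \<Rightarrow> 'a set" where
  "dual_cone K = {s. \<forall>x\<in>K. 0 \<le> s \<bullet> x}"

text \<open>Derivatives of F on the open set Q:
  g x is the gradient, H x h = Hessian at x applied to h (so D2F(x)[h,u] = H x h \<bullet> u),
  T x h u v = D3F(x)[h,u,v] (derivative of y \<mapsto> D2F(y)[u,v] at x in direction h).\<close>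

definition derivs3 :: "'a::euclidean_space set \<Rightarrow> ('a \<Rightarrow> real) \<Rightarrow> ('a \<Rightarrow> 'a)
     \<Rightarrow> ('a \<Rightarrow> 'a \<Rightarrow> 'a) \<Rightarrow> ('a \<Rightarrow> 'a \<Rightarrow> 'a \<Rightarrow> 'a \<Rightarrow> real) \<Rightarrow> bool" where
  "derivs3 Q F g H T \<longleftrightarrow>
     (\<forall>x\<in>Q. (F has_derivative (\<lambda>h. g x \<bullet> h)) (at x)
          \<and> (g has_derivative H x) (at x)
          \<and> (\<forall>u v. ((\<lambda>y. H y u \<bullet> v) has_derivative (\<lambda>h. T x h u v)) (at x)))
     \<and> (\<forall>h u v. continuous_on Q (\<lambda>x. T x h u v))"

definition sc_barrier :: "'a::euclidean_space set \<Rightarrow> ('a \<Rightarrow> real) \<Rightarrow> ('a \<Rightarrow> 'a)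
     \<Rightarrow> ('a \<Rightarrow> 'a \<Rightarrow> 'a) \<Rightarrow> ('a \<Rightarrow> 'a \<Rightarrow> 'a \<Rightarrow> 'a \<Rightarrow> real) \<Rightarrow> real \<Rightarrow> bool" where
  "sc_barrier K F g H T \<nu> \<longleftrightarrow>
     derivs3 (interior K) F g H T
     \<and> convex_on (interior K) F
     \<and> (\<forall>x\<in>frontier (interior K). filterlim F at_top (at x within interior K))
     \<and> (\<forall>x\<in>interior K. \<forall>h. \<bar>T x h h h\<bar> \<le> 2 * (H x h \<bullet> h) powr (3/2))
     \<and> (\<forall>x\<in>interior K. \<forall>h. (g x \<bullet> h)\<^sup>2 \<le> \<nu> * (H x h \<bullet> h))"

definition normal_barrier :: "'a::euclidean_space set \<Rightarrow> ('a \<Rightarrow> real) \<Rightarrow> ('a \<Rightarrow> 'a)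
     \<Rightarrow> ('a \<Rightarrow> 'a \<Rightarrow> 'a) \<Rightarrow> ('a \<Rightarrow> 'a \<Rightarrow> 'a \<Rightarrow> 'a \<Rightarrow> real) \<Rightarrow> real \<Rightarrow> bool" where
  "normal_barrier K F g H T \<nu> \<longleftrightarrow>
     sc_barrier K F g H T \<nu>
     \<and> (\<forall>x\<in>interior K. \<forall>\<tau>>0. F (\<tau> *\<^sub>R x) = F x - \<nu> * ln \<tau>)"

definition negative_curvature :: "'a::euclidean_space set
     \<Rightarrow> ('a \<Rightarrow> 'a \<Rightarrow> 'a \<Rightarrow> 'a \<Rightarrow> real) \<Rightarrow> bool" where
  "negative_curvature K T \<longleftrightarrow> (\<forall>x\<in>interior K. \<forall>h\<in>K. \<forall>u. T x h u u \<le> 0)"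

end

theory Submission
  imports Defs
begin

lemma path_deriv:
  fixes f :: "'a::real_normed_vector \<Rightarrow> real"
  assumes "(f has_derivative f') (at (z + t *\<^sub>R d))"
  shows "((\<lambda>s. f (z + s *\<^sub>R d)) has_real_derivative (f' d)) (at t)"
proof -
  have lin: "linear f'" using assms has_derivative_linear by blast
  have p: "((\<lambda>s. z + s *\<^sub>R d) has_derivative (\<lambda>s. s *\<^sub>R d)) (at t)"
    by (auto intro!: derivative_eq_intros)
  have "((\<lambda>s. f (z + s *\<^sub>R d)) has_derivative (\<lambda>s. f' (s *\<^sub>R d))) (at t)"
    using has_derivative_compose[OF p assms] by simp
  moreover have "(\<lambda>s. f' (s *\<^sub>R d)) = (\<lambda>s. f' d * s)"
    using lin by (auto simp: linear_scale)
  ultimately show ?thesis by (simp add: has_field_derivative_def mult.commute[of _ "f' d"])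
qed

lemma int_add:
  fixes K :: "'a::euclidean_space set"
  assumes "cone K" "convex K" "z \<in> interior K" "d \<in> K"
  shows "z + d \<in> interior K"
proof -
  obtain e where e: "e > 0" "ball z e \<subseteq> K" using assms(3) by (meson mem_interior)
  have "ball (z + d) e \<subseteq> K"
  proof
    fix w assume "w \<in> ball (z + d) e"
    then have "w - d \<in> ball z e" by (simp add: dist_norm algebra_simps)
    then have a: "w - d \<in> K" using e by blast
    have "(1/2) *\<^sub>R (w - d) + (1/2) *\<^sub>R d \<in> K"
      using assms(2) a assms(4) by (simp add: convex_def)
    then have "2 *\<^sub>R ((1/2) *\<^sub>R (w - d) + (1/2) *\<^sub>R d) \<in> K"
      using assms(1) by (simp add: cone_def)
    then show "w \<in> K" by (simp add: algebra_simps)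
  qed
  then show ?thesis using e(1) by (meson mem_interior)
qed

lemma int_scale:
  fixes K :: "'a::euclidean_space set"
  assumes "cone K" "z \<in> interior K" "(c::real) > 0"
  shows "c *\<^sub>R z \<in> interior K"
proof -
  obtain e where e: "e > 0" "ball z e \<subseteq> K" using assms(2) by (meson mem_interior)
  have "ball (c *\<^sub>R z) (c * e) \<subseteq> K"
  proof
    fix w assume "w \<in> ball (c *\<^sub>R z) (c * e)"
    then have "dist (c *\<^sub>R z) w < c * e" by simp
    moreover have "dist (c *\<^sub>R z) w = c * dist z ((1/c) *\<^sub>R w)"
    proof -
      have "c *\<^sub>R z - w = c *\<^sub>R (z - (1/c) *\<^sub>R w)" using assms(3) by (simp add: algebra_simps)
      then show ?thesis using assms(3) by (simp add: dist_norm)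
    qed
    ultimately have "(1/c) *\<^sub>R w \<in> ball z e" using assms(3) by simp
    then have "(1/c) *\<^sub>R w \<in> K" using e by blast
    then have "c *\<^sub>R ((1/c) *\<^sub>R w) \<in> K" using assms(1,3) unfolding cone_def by (meson less_imp_le)
    then show "w \<in> K" using assms(3) by simp
  qed
  then show ?thesis using e(1) assms(3) by (meson mem_interior mult_pos_pos)
qed

lemma eps_ext:
  fixes a b :: real
  assumes "\<And>e. e > 0 \<Longrightarrow> 0 \<le> a + e * b"
  shows "0 \<le> a"
proof -
  have "((\<lambda>e. a + e * b) \<longlongrightarrow> a + 0 * b) (at_right 0)"
    by (intro tendsto_intros)
  moreover have "eventually (\<lambda>e. 0 \<le> a + e * b) (at_right (0::real))"
    using assms by (simp add: eventually_at_right_less eventually_mono[OF eventually_at_right_less] )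
  ultimately show ?thesis
    by (metis add_0_right mult_zero_left tendsto_lowerbound trivial_limit_at_right_real)
qed

theorem mainTheorem16:
  fixes K :: "'a::euclidean_space set" and F :: "'a \<Rightarrow> real"
    and g :: "'a \<Rightarrow> 'a" and H :: "'a \<Rightarrow> 'a \<Rightarrow> 'a"
    and T :: "'a \<Rightarrow> 'a \<Rightarrow> 'a \<Rightarrow> 'a \<Rightarrow> real" and \<nu> :: real
  assumes "regular_cone K"
    and "normal_barrier K F g H T \<nu>"
    and "negative_curvature K T"
    and "x \<in> interior K" and "h \<in> K"
  shows "H x h \<in> dual_cone K \<and> g (x + h) - g x \<in> dual_cone K"
proof -
  have cK: "cone K" and vK: "convex K" using assms(1) by (auto simp: regular_cone_def)
  have oK: "open (interior K)" by simp
  have gder: "\<And>z. z \<in> interior K \<Longrightarrow> (g has_derivative H z) (at z)"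
    and Fder: "\<And>z. z \<in> interior K \<Longrightarrow> (F has_derivative (\<lambda>h. g z \<bullet> h)) (at z)"
    and Tder: "\<And>z u v. z \<in> interior K \<Longrightarrow> ((\<lambda>y. H y u \<bullet> v) has_derivative (\<lambda>h. T z h u v)) (at z)"
    using assms(2) by (auto simp: normal_barrier_def sc_barrier_def derivs3_def)
  have hom: "\<And>z \<tau>. z \<in> interior K \<Longrightarrow> \<tau> > 0 \<Longrightarrow> F (\<tau> *\<^sub>R z) = F z - \<nu> * ln \<tau>"
    using assms(2) by (auto simp: normal_barrier_def)
  have negc: "\<And>z d u. z \<in> interior K \<Longrightarrow> d \<in> K \<Longrightarrow> T z d u u \<le> 0"
    using assms(3) by (auto simp: negative_curvature_def)
  have intK: "\<And>z. z \<in> interior K \<Longrightarrow> z \<in> K" using interior_subset by blast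
  have ghom: "g (\<tau> *\<^sub>R z) = (1/\<tau>) *\<^sub>R g z" if z: "z \<in> interior K" and t: "\<tau> > 0" for z \<tau>
  proof -
    have tz: "\<tau> *\<^sub>R z \<in> interior K" using int_scale[OF cK z t] .
    have sc: "((\<lambda>w. \<tau> *\<^sub>R w) has_derivative (\<lambda>w. \<tau> *\<^sub>R w)) (at z)"
      by (auto intro!: derivative_eq_intros)
    have d1: "((\<lambda>w. F (\<tau> *\<^sub>R w)) has_derivative (\<lambda>k. g (\<tau> *\<^sub>R z) \<bullet> (\<tau> *\<^sub>R k))) (at z)"
      using has_derivative_compose[OF sc Fder[OF tz]] by simp
    have d2: "((\<lambda>w. F w - \<nu> * ln \<tau>) has_derivative (\<lambda>k. g z \<bullet> k)) (at z)"
      using Fder[OF z] by (auto intro!: derivative_eq_intros)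
    have d3: "((\<lambda>w. F (\<tau> *\<^sub>R w)) has_derivative (\<lambda>k. g z \<bullet> k)) (at z)"
      using has_derivative_transform_within_open[OF d2 oK z, of "\<lambda>w. F (\<tau> *\<^sub>R w)"] hom t
      by simp
    have eq: "(\<lambda>k. g (\<tau> *\<^sub>R z) \<bullet> (\<tau> *\<^sub>R k)) = (\<lambda>k. g z \<bullet> k)"
      using has_derivative_unique[OF d1 d3] .
    have "\<forall>k. (\<tau> *\<^sub>R g (\<tau> *\<^sub>R z) - g z) \<bullet> k = 0"
      using eq by (metis inner_diff_left inner_scaleR_left inner_scaleR_right right_minus_eq)
    then have "\<tau> *\<^sub>R g (\<tau> *\<^sub>R z) - g z = 0" by (metis inner_eq_zero_iff)
    then have "g z = \<tau> *\<^sub>R g (\<tau> *\<^sub>R z)" by simp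
    then show ?thesis using t by simp
  qed
  have key: "0 \<le> (g (x + k) - g x) \<bullet> y" if k: "k \<in> K" and y: "y \<in> interior K" for k y
  proof -
    define \<phi> where "\<phi> b = (g (x + k + b *\<^sub>R y) - g (x + b *\<^sub>R y)) \<bullet> y" for b
    have pts: "x + b *\<^sub>R y \<in> interior K" "x + k + b *\<^sub>R y \<in> interior K" if "b \<ge> 0" for b
    proof -
      have "b *\<^sub>R y \<in> K" using that intK[OF y] cK by (simp add: cone_def)
      then show "x + b *\<^sub>R y \<in> interior K" using int_add[OF cK vK assms(4)] by blast
      then show "x + k + b *\<^sub>R y \<in> interior K" using int_add[OF cK vK _ k]
        by (metis add.assoc add.commute)
    qed
    have A: "H (x + k + b *\<^sub>R y) y \<bullet> y \<le> H (x + b *\<^sub>R y) y \<bullet> y" if b: "b \<ge> 0" for b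
    proof -
      define \<psi> where "\<psi> a = H ((x + b *\<^sub>R y) + a *\<^sub>R k) y \<bullet> y" for a
      have "\<psi> 1 \<le> \<psi> 0"
      proof (rule DERIV_nonpos_imp_nonincreasing[of 0 1])
        fix a :: real assume a: "0 \<le> a" "a \<le> 1"
        have ak: "a *\<^sub>R k \<in> K" using a k cK by (simp add: cone_def)
        have p: "(x + b *\<^sub>R y) + a *\<^sub>R k \<in> interior K"
          using int_add[OF cK vK pts(1)[OF b] ak] .
        have "(\<psi> has_real_derivative T ((x + b *\<^sub>R y) + a *\<^sub>R k) k y y) (at a)"
          unfolding \<psi>_def using path_deriv[OF Tder[OF p]] by blast
        moreover have "T ((x + b *\<^sub>R y) + a *\<^sub>R k) k y y \<le> 0" using negc[OF p k] .
        ultimately show "\<exists>D. DERIV \<psi> a :> D \<and> D \<le> 0" by blast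
      qed simp
      then show ?thesis unfolding \<psi>_def by (simp add: algebra_simps)
    qed
    have gd: "((\<lambda>w. g w \<bullet> y) has_derivative (\<lambda>j. H w j \<bullet> y)) (at w)" if "w \<in> interior K" for w
      using gder[OF that] by (auto intro!: derivative_eq_intros)
    have B: "\<phi> b \<le> \<phi> 0" if b: "b \<ge> 0" for b
    proof (rule DERIV_nonpos_imp_nonincreasing[OF b])
      fix c :: real assume c: "0 \<le> c" "c \<le> b"
      have "((\<lambda>s. g ((x + k) + s *\<^sub>R y) \<bullet> y) has_real_derivative H (x + k + c *\<^sub>R y) y \<bullet> y) (at c)"
        using path_deriv[OF gd[OF pts(2)[OF c(1)]]] by simp
      moreover have "((\<lambda>s. g (x + s *\<^sub>R y) \<bullet> y) has_real_derivative H (x + c *\<^sub>R y) y \<bullet> y) (at c)"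
        using path_deriv[OF gd[OF pts(1)[OF c(1)]]] by simp
      ultimately have "(\<phi> has_real_derivative H (x + k + c *\<^sub>R y) y \<bullet> y - H (x + c *\<^sub>R y) y \<bullet> y) (at c)"
        unfolding \<phi>_def inner_diff_left by (intro DERIV_diff) simp_all
      then show "\<exists>D. DERIV \<phi> c :> D \<and> D \<le> 0" using A[OF c(1)] by auto
    qed
    define e where "e n = inverse (real (Suc n))" for n
    have e0: "e \<longlonglongrightarrow> 0" unfolding e_def by (rule LIMSEQ_inverse_real_of_nat)
    have epos: "e n > 0" for n unfolding e_def by simp
    have ycont: "isCont g y" using has_derivative_continuous[OF gder[OF y]] .
    have conv: "(\<lambda>n. g (y + e n *\<^sub>R u)) \<longlonglongrightarrow> g y" for u
    proof -
      have "(\<lambda>n. y + e n *\<^sub>R u) \<longlonglongrightarrow> y + 0 *\<^sub>R u" by (intro tendsto_intros e0)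
      then show ?thesis using isCont_tendsto_compose[OF ycont] by simp
    qed
    have rep: "g (u + real (Suc n) *\<^sub>R y) = e n *\<^sub>R g (y + e n *\<^sub>R u)" if u: "u \<in> K" for u n
    proof -
      have "e n *\<^sub>R u \<in> K" using u cK epos[of n] by (simp add: cone_def)
      then have yi: "y + e n *\<^sub>R u \<in> interior K" using int_add[OF cK vK y] by blast
      have "u + real (Suc n) *\<^sub>R y = real (Suc n) *\<^sub>R (y + e n *\<^sub>R u)"
        unfolding e_def by (simp add: scaleR_add_right add.commute)
      then show ?thesis using ghom[OF yi, of "real (Suc n)"] unfolding e_def by (simp add: divide_inverse)
    qed
    have xK: "x \<in> K" using intK[OF assms(4)] .
    have xkK: "x + k \<in> K"
      using int_add[OF cK vK assms(4) k] intK by blast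
    have phin: "\<phi> (real (Suc n)) = e n * ((g (y + e n *\<^sub>R (x + k)) - g (y + e n *\<^sub>R x)) \<bullet> y)" for n
      unfolding \<phi>_def using rep[OF xK, of n] rep[OF xkK, of n]
      by (simp add: algebra_simps)
    have "(\<lambda>n. \<phi> (real (Suc n))) \<longlonglongrightarrow> 0 * ((g y - g y) \<bullet> y)"
      unfolding phin by (intro tendsto_intros e0 conv)
    then have lim: "(\<lambda>n. \<phi> (real (Suc n))) \<longlonglongrightarrow> 0" by simp
    have "0 \<le> \<phi> 0"
      using lim B by (intro tendsto_upperbound[OF lim]) (auto intro!: always_eventually)
    then show ?thesis unfolding \<phi>_def by simp
  qed
  have c1: "0 \<le> H x h \<bullet> y" if y: "y \<in> interior K" for y
  proof -
    define f where "f t = g (x + t *\<^sub>R h) \<bullet> y" for t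
    have gd: "((\<lambda>w. g w \<bullet> y) has_derivative (\<lambda>j. H x j \<bullet> y)) (at x)"
      using gder[OF assms(4)] by (auto intro!: derivative_eq_intros)
    have "(f has_real_derivative H x h \<bullet> y) (at 0)"
      unfolding f_def using path_deriv[of _ _ x 0 h] gd by simp
    then have "((\<lambda>t. (f t - f 0) / (t - 0)) \<longlongrightarrow> H x h \<bullet> y) (at 0)"
      using has_field_derivative_iff by blast
    then have L: "((\<lambda>t. (f t - f 0) / (t - 0)) \<longlongrightarrow> H x h \<bullet> y) (at_right 0)"
      by (metis filterlim_at_split)
    have "eventually (\<lambda>t. 0 \<le> (f t - f 0) / (t - 0)) (at_right 0)"
    proof (rule eventually_at_rightI[of 0 1])
      fix t :: real assume t: "t \<in> {0<..<1}"
      have "t *\<^sub>R h \<in> K" using t assms(5) cK by (simp add: cone_def)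
      then have "0 \<le> f t - f 0" using key[OF _ y] unfolding f_def by (simp add: inner_diff_left)
      then show "0 \<le> (f t - f 0) / (t - 0)" using t by simp
    qed simp
    then show ?thesis using tendsto_lowerbound[OF L] by simp
  qed
  have ext: "0 \<le> s \<bullet> y" if all: "\<And>y. y \<in> interior K \<Longrightarrow> 0 \<le> s \<bullet> y" and y: "y \<in> K" for s y
  proof (rule eps_ext[of _ "s \<bullet> x"])
    fix \<epsilon> :: real assume e: "\<epsilon> > 0"
    have "\<epsilon> *\<^sub>R x + y \<in> interior K" using int_add[OF cK vK int_scale[OF cK assms(4) e] y] .
    then have "0 \<le> s \<bullet> (\<epsilon> *\<^sub>R x + y)" using all by blast
    then show "0 \<le> s \<bullet> y + \<epsilon> * (s \<bullet> x)" by (simp add: inner_add_right)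
  qed
  show ?thesis
    unfolding dual_cone_def
    using ext[OF c1] ext[of "g (x + h) - g x"] key[OF assms(5)]
    by (auto simp: inner_commute)
qed

end
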